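(* Let $\mu$ be an integer with $h/2<\mu\le h$ and let $l$ be an integer with $2\le l\le n$. Then there exists $p\in\mathcal P$ such that $\Gamma_\mu(p)$ is $l$-cyclic if and only if $\mu\le \frac{l-1}{l}h$.
   Context: Let $n,h\ge2$, $N=\{1,\dots,n\}$, $H=\{1,\dots,h\}$, $\mathcal P$ the set of $h$-tuples of linear orders on $N$; $x>_{p_i}y$ means $x\neq y$ and $p_i$ ranks $x$ above $y$; $x>^p_\mu y$ means $|\{i: x>_{p_i}y\}|\ge\mu$. The $\mu$-majority graph is the directed graph $\Gamma_\mu(p)=(N,\{(x,y): x>^p_\mu y\})$. An $l$-cycle is a directed graph on $l$ distinct vertices $x_1,\dots,x_l$ with arc set exactly $\{(x_j,x_{j+1}):1\le j\le l\}$, $x_{l+1}=x_1$. A directed graph is $l$-cyclic if it has an $l$-cycle as a subgraph (vertex set and arc set contained in those of the graph). *)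

theory Defs
  imports Complex_Main
begin

text \<open>A preference profile with h voters on alternatives N = {1..n}:
  p i is a linear order on {1..n} for each voter i in {1..h};
  (x, y) \<in> p i means voter i ranks x weakly above y.\<close>

definition profiles :: "nat \<Rightarrow> nat \<Rightarrow> (nat \<Rightarrow> nat rel) set" where
  "profiles n h = {p. \<forall>i\<in>{1..h}. linear_order_on {1..n} (p i)}"

definition pref :: "nat rel \<Rightarrow> nat \<Rightarrow> nat \<Rightarrow> bool" where
  "pref r x y \<longleftrightarrow> x \<noteq> y \<and> (x, y) \<in> r"

definition maj :: "nat \<Rightarrow> nat \<Rightarrow> (nat \<Rightarrow> nat rel) \<Rightarrow> nat \<Rightarrow> nat \<Rightarrow> bool" where
  "maj h \<mu> p x y \<longleftrightarrow> card {i\<in>{1..h}. pref (p i) x y} \<ge> \<mu>"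

type_synonym digraph = "nat set \<times> (nat \<times> nat) set"

definition maj_graph :: "nat \<Rightarrow> nat \<Rightarrow> nat \<Rightarrow> (nat \<Rightarrow> nat rel) \<Rightarrow> digraph" where
  "maj_graph n h \<mu> p = ({1..n}, {(x, y). x \<in> {1..n} \<and> y \<in> {1..n} \<and> maj h \<mu> p x y})"

definition is_cycle :: "nat \<Rightarrow> digraph \<Rightarrow> bool" where
  "is_cycle l G \<longleftrightarrow> (\<exists>x :: nat \<Rightarrow> nat. inj_on x {1..l} \<and> fst G = x ` {1..l} \<and>
      snd G = {(x j, x (if j = l then 1 else j + 1)) | j. j \<in> {1..l}})"

definition subgraph :: "digraph \<Rightarrow> digraph \<Rightarrow> bool" where
  "subgraph C G \<longleftrightarrow> fst C \<subseteq> fst G \<and> snd C \<subseteq> snd G"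

definition l_cyclic :: "nat \<Rightarrow> digraph \<Rightarrow> bool" where
  "l_cyclic l G \<longleftrightarrow> (\<exists>C. is_cycle l C \<and> subgraph C G)"

end

theory Submission
  imports Defs
begin

lemma rank_lin:
  assumes "inj_on g A"
  shows "linear_order_on A {(x,y). x\<in>A \<and> y\<in>A \<and> (g x :: nat) \<le> g y}"
proof -
  let ?r = "{(x,y). x\<in>A \<and> y\<in>A \<and> (g x :: nat) \<le> g y}"
  have "?r \<subseteq> A \<times> A" by auto
  moreover have "refl_on A ?r" by (auto simp: refl_on_def)
  moreover have "trans ?r" by (auto simp: trans_def)
  moreover have "antisym ?r" using assms by (auto simp: antisym_on_def inj_on_def)
  moreover have "total_on A ?r" by (auto simp: total_on_def)
  ultimately show ?thesis
    unfolding linear_order_on_def partial_order_on_def preorder_on_def by blast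
qed

lemma no_full_cycle:
  assumes lin: "linear_order_on A r" and inj: "inj_on x {1..l}" and l2: "2 \<le> (l::nat)"
    and all: "\<forall>j\<in>{1..l}. pref r (x j) (x (if j = l then 1 else j + 1))"
  shows False
proof -
  have tr: "trans r" and an: "antisym r" using lin
    unfolding linear_order_on_def partial_order_on_def preorder_on_def by auto
  have step: "(x 1, x j) \<in> r" if "2 \<le> j" "j \<le> l" for j
    using that
  proof (induction j rule: nat_induct_at_least)
    case base
    have "pref r (x 1) (x (Suc 1))" using all[rule_format, of 1] l2 by simp
    then show ?case by (simp add: pref_def numeral_2_eq_2)
  next
    case (Suc j)
    have "pref r (x j) (x (Suc j))" using all[rule_format, of j] Suc by auto
    then have "(x j, x (Suc j)) \<in> r" by (simp add: pref_def)
    with Suc show ?case using tr by (meson Suc_leD transD)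
  qed
  have "(x 1, x l) \<in> r" using step l2 by auto
  moreover have "pref r (x l) (x 1)" using all[rule_format, of l] l2 by auto
  ultimately have "x 1 = x l" using an by (auto simp: pref_def antisym_on_def)
  moreover have "x 1 \<noteq> x l"
  proof
    assume "x 1 = x l"
    then have "1 = l" using inj_onD[OF inj] l2 by simp
    then show False using l2 by simp
  qed
  ultimately show False by simp
qed


definition rk :: "nat \<Rightarrow> nat \<Rightarrow> nat \<Rightarrow> nat" where
  "rk l k y = (if y \<le> l then (if k \<le> y then y - k else y + l - k) else y)"

lemma rk_inj:
  assumes "1 \<le> k" "k \<le> l"
  shows "inj_on (rk l k) {1..n}"
  unfolding inj_on_def rk_def using assms by (auto split: if_splits)

lemma rk_step:
  assumes "2 \<le> l" "1 \<le> k" "k \<le> l" "1 \<le> j" "j \<le> l" "(if j = l then 1 else j + 1) \<noteq> k"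
  shows "rk l k j \<le> rk l k (if j = l then 1 else j + 1)"
  using assms unfolding rk_def by (auto split: if_splits)

lemma block_card:
  assumes "0 < (m::nat)"
  shows "card {i\<in>{1..h}. (i - 1) div m + 1 = s} \<le> m"
proof -
  have "{i\<in>{1..h}. (i - 1) div m + 1 = s} \<subseteq> {(s-1)*m+1 .. (s-1)*m+m}"
  proof
    fix i assume i: "i \<in> {i\<in>{1..h}. (i - 1) div m + 1 = s}"
    then have d: "(i - 1) div m = s - 1" and i1: "1 \<le> i" by auto
    define r where "r = (i-1) mod m"
    have e: "(s-1)*m + r = i - 1" using div_mult_mod_eq[of "i-1" m] d unfolding r_def by metis
    have "r < m" using assms unfolding r_def by simp
    then show "i \<in> {(s-1)*m+1 .. (s-1)*m+m}" using e i1 by (simp only: atLeastAtMost_iff) linarith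
  qed
  then have "card {i\<in>{1..h}. (i - 1) div m + 1 = s} \<le> card {(s-1)*m+1 .. (s-1)*m+m}"
    by (intro card_mono) auto
  then show ?thesis by simp
qed

lemma sum_card_swap:
  assumes "finite A" "finite B"
  shows "(\<Sum>j\<in>A. card {i\<in>B. P i j}) = (\<Sum>i\<in>B. card {j\<in>A. P i j})"
proof -
  have "(\<Sum>j\<in>A. card {i\<in>B. P i j}) = (\<Sum>j\<in>A. \<Sum>i\<in>B. if P i j then 1 else 0)"
    using assms by (simp add: sum.If_cases Int_def)
  also have "\<dots> = (\<Sum>i\<in>B. \<Sum>j\<in>A. if P i j then 1 else 0)" by (rule sum.swap)
  also have "\<dots> = (\<Sum>i\<in>B. card {j\<in>A. P i j})"
    using assms by (simp add: sum.If_cases Int_def)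
  finally show ?thesis .
qed


theorem proposition7:
  fixes n h \<mu> l :: nat
  assumes "n \<ge> 2" and "h \<ge> 2"
    and "real h / 2 < real \<mu>" and "\<mu> \<le> h"
    and "2 \<le> l" and "l \<le> n"
  shows "(\<exists>p\<in>profiles n h. l_cyclic l (maj_graph n h \<mu> p))
           \<longleftrightarrow> real \<mu> \<le> (real l - 1) / real l * real h"
proof -
  have lpos: "real l > 0" using assms(5) by simp
  have eqv: "real \<mu> \<le> (real l - 1) / real l * real h \<longleftrightarrow> l * \<mu> \<le> (l - 1) * h"
  proof -
    have "real \<mu> \<le> (real l - 1) / real l * real h \<longleftrightarrow> real l * real \<mu> \<le> (real l - 1) * real h"
      using lpos by (simp add: field_simps)
    also have "\<dots> \<longleftrightarrow> real (l * \<mu>) \<le> real ((l - 1) * h)"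
      using assms(5) by (simp add: of_nat_diff)
    also have "\<dots> \<longleftrightarrow> l * \<mu> \<le> (l - 1) * h" by (rule of_nat_le_iff)
    finally show ?thesis .
  qed
  let ?s = "\<lambda>j. if j = l then 1 else j + 1"
  show ?thesis unfolding eqv
  proof
    assume "\<exists>p\<in>profiles n h. l_cyclic l (maj_graph n h \<mu> p)"
    then obtain p C where p: "p \<in> profiles n h" and C: "is_cycle l C"
      and sub: "subgraph C (maj_graph n h \<mu> p)" unfolding l_cyclic_def by blast
    obtain x where inj: "inj_on x {1..l}" and Cs: "snd C = {(x j, x (?s j)) | j. j \<in> {1..l}}"
      using C unfolding is_cycle_def by blast
    define S where "S j = {i\<in>{1..h}. pref (p i) (x j) (x (?s j))}" for j
    have mj: "\<mu> \<le> card (S j)" if "j \<in> {1..l}" for j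
    proof -
      have "(x j, x (?s j)) \<in> snd C" using Cs that by blast
      then have "(x j, x (?s j)) \<in> snd (maj_graph n h \<mu> p)" using sub unfolding subgraph_def by blast
      then show ?thesis unfolding maj_graph_def maj_def S_def by simp
    qed
    have vt: "card {j\<in>{1..l}. pref (p i) (x j) (x (?s j))} \<le> l - 1" if i: "i \<in> {1..h}" for i
    proof -
      have lin: "linear_order_on {1..n} (p i)" using p i unfolding profiles_def by blast
      have ne: "{j\<in>{1..l}. pref (p i) (x j) (x (?s j))} \<noteq> {1..l}"
      proof
        assume "{j\<in>{1..l}. pref (p i) (x j) (x (?s j))} = {1..l}"
        then have "\<forall>j\<in>{1..l}. pref (p i) (x j) (x (?s j))" by blast
        then show False using no_full_cycle[OF lin inj assms(5)] by blast
      qed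
      have "{j\<in>{1..l}. pref (p i) (x j) (x (?s j))} \<subset> {1..l}" using ne by blast
      then have "card {j\<in>{1..l}. pref (p i) (x j) (x (?s j))} < card {1..l}"
        by (intro psubset_card_mono) auto
      then show ?thesis by simp
    qed
    have "l * \<mu> = (\<Sum>j\<in>{1..l}. \<mu>)" by simp
    also have "\<dots> \<le> (\<Sum>j\<in>{1..l}. card (S j))" using mj by (intro sum_mono) auto
    also have "\<dots> = (\<Sum>i\<in>{1..h}. card {j\<in>{1..l}. pref (p i) (x j) (x (?s j))})"
      unfolding S_def by (rule sum_card_swap) auto
    also have "\<dots> \<le> (\<Sum>i\<in>{1..h}. l - 1)" using vt by (intro sum_mono) auto
    also have "\<dots> = (l - 1) * h" by simp
    finally show "l * \<mu> \<le> (l - 1) * h" .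
  next
    assume le: "l * \<mu> \<le> (l - 1) * h"
    define m where "m = h - \<mu>"
    have lh: "(l - 1) * h + h = l * h" using assms(5)
      by (cases l) auto
    have hlm: "h \<le> l * m" unfolding m_def using le lh assms(4)
      by (simp add: diff_mult_distrib2)
    have mpos: "0 < m" using hlm assms(2) by (cases m) auto
    define f where "f i = (i - 1) div m + 1" for i
    have fr: "1 \<le> f i \<and> f i \<le> l" if "i \<in> {1..h}" for i
    proof -
      have "i - 1 < l * m" using that hlm by auto
      then have "(i - 1) div m < l" using mpos
        by (simp add: div_less_iff_less_mult mult.commute)
      then show ?thesis unfolding f_def by simp
    qed
    define p where "p i = {(a,b). a\<in>{1..n} \<and> b\<in>{1..n} \<and> rk l (f i) a \<le> rk l (f i) b}" for i
    have pp: "p \<in> profiles n h"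
      unfolding profiles_def p_def using fr rk_inj rank_lin by blast
    define C where "C = ({1..l}, {(id j, id (?s j)) | j. j \<in> {1..l}})"
    have cyc: "is_cycle l C" unfolding is_cycle_def C_def
      by (rule exI[of _ id]) simp
    have arc: "maj h \<mu> p j (?s j)" if j: "j \<in> {1..l}" for j
    proof -
      let ?B = "{i\<in>{1..h}. f i = ?s j}"
      have "{1..h} - ?B \<subseteq> {i\<in>{1..h}. pref (p i) j (?s j)}"
      proof
        fix i assume i: "i \<in> {1..h} - ?B"
        have "rk l (f i) j \<le> rk l (f i) (?s j)"
          using rk_step[OF assms(5), of "f i" j] fr[of i] i j by auto
        moreover have "j \<noteq> ?s j" using assms(5) j by auto
        moreover have "?s j \<in> {1..n}" "j \<in> {1..n}" using j assms(6) by auto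
        ultimately show "i \<in> {i\<in>{1..h}. pref (p i) j (?s j)}"
          using i unfolding pref_def p_def by auto
      qed
      then have a: "card ({1..h} - ?B) \<le> card {i\<in>{1..h}. pref (p i) j (?s j)}"
        by (intro card_mono) auto
      have b: "card {1..h} - card ?B \<le> card ({1..h} - ?B)"
        by (rule diff_card_le_card_Diff) auto
      have c: "card ?B \<le> m" unfolding f_def by (rule block_card[OF mpos])
      have "\<mu> \<le> h - card ?B" using c assms(4) unfolding m_def by arith
      then have "\<mu> \<le> card {i\<in>{1..h}. pref (p i) j (?s j)}" using a b by simp
      then show ?thesis unfolding maj_def .
    qed
    have "subgraph C (maj_graph n h \<mu> p)"
      unfolding subgraph_def C_def maj_graph_def
    proof (intro conjI subsetI)
      fix e assume "e \<in> snd ({1..l}, {(id j, id (?s j)) | j. j \<in> {1..l}})"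
      then obtain j where j: "j \<in> {1..l}" and e: "e = (j, ?s j)" by auto
      have "maj h \<mu> p j (?s j)" by (rule arc[OF j])
      moreover have "j \<in> {1..n}" "?s j \<in> {1..n}" using j assms(5,6) by auto
      ultimately show "e \<in> snd ({1..n}, {(x, y). x \<in> {1..n} \<and> y \<in> {1..n} \<and> maj h \<mu> p x y})"
        using e by simp
    qed (use assms(6) in auto)
    then show "\<exists>p\<in>profiles n h. l_cyclic l (maj_graph n h \<mu> p)"
      using pp cyc unfolding l_cyclic_def by blast
  qed
qed

end
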